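(* Let $G$ be a bipartite graph with parts $B_1,B_2$, and let $a,c\in B_1$ and $b,d\in B_2$. There is perfect pair state transfer between $e_a-e_b$ and $e_c-e_d$ (with respect to the Laplacian of $G$) if and only if there is perfect plus state transfer between $e_a+e_b$ and $e_c+e_d$ (with respect to the unsigned Laplacian of $G$).
   Context: Let $A$ be the adjacency matrix and $\Delta$ the degree matrix of $G$. The Laplacian is $L=\Delta-A$ and the unsigned Laplacian is $L_+=\Delta+A$. Perfect pair state transfer between $e_a-e_b$ and $e_c-e_d$ means $\exp(itL)(e_a-e_b)=\gamma(e_c-e_d)$ for some $t\ge0$ and $\gamma\in\mathbb{C}$, $|\gamma|=1$. Perfect plus state transfer between $e_a+e_b$ and $e_c+e_d$ means $\exp(itL_+)(e_a+e_b)=\gamma(e_c+e_d)$ for some $t\ge0$ and $|\gamma|=1$. Here $e_v$ is the standard basis vector of vertex $v$. *)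

theory Defs
  imports "HOL-Analysis.Analysis"
begin

definition simple_graph :: "('n::finite \<Rightarrow> 'n \<Rightarrow> bool) \<Rightarrow> bool" where
  "simple_graph adj \<longleftrightarrow> (\<forall>u v. adj u v \<longrightarrow> adj v u) \<and> (\<forall>u. \<not> adj u u)"

definition bipartite_parts :: "('n::finite \<Rightarrow> 'n \<Rightarrow> bool) \<Rightarrow> 'n set \<Rightarrow> 'n set \<Rightarrow> bool" where
  "bipartite_parts adj B1 B2 \<longleftrightarrow> B1 \<union> B2 = UNIV \<and> B1 \<inter> B2 = {} \<and>
     (\<forall>u v. adj u v \<longrightarrow> (u \<in> B1 \<and> v \<in> B2) \<or> (u \<in> B2 \<and> v \<in> B1))"

definition adj_matrix :: "('n::finite \<Rightarrow> 'n \<Rightarrow> bool) \<Rightarrow> complex^'n^'n" where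
  "adj_matrix adj = (\<chi> u v. if adj u v then 1 else 0)"

definition deg_matrix :: "('n::finite \<Rightarrow> 'n \<Rightarrow> bool) \<Rightarrow> complex^'n^'n" where
  "deg_matrix adj = (\<chi> u v. if u = v then of_nat (card {w. adj u w}) else 0)"

definition laplacian :: "('n::finite \<Rightarrow> 'n \<Rightarrow> bool) \<Rightarrow> complex^'n^'n" where
  "laplacian adj = deg_matrix adj - adj_matrix adj"

definition signless_laplacian :: "('n::finite \<Rightarrow> 'n \<Rightarrow> bool) \<Rightarrow> complex^'n^'n" where
  "signless_laplacian adj = deg_matrix adj + adj_matrix adj"

definition matpow :: "'a::comm_ring_1^'n::finite^'n \<Rightarrow> nat \<Rightarrow> 'a^'n^'n" where
  "matpow M k = ((\<lambda>X. M ** X) ^^ k) (mat 1)"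

definition exp_itM_vec :: "real \<Rightarrow> complex^'n::finite^'n \<Rightarrow> complex^'n \<Rightarrow> complex^'n" where
  "exp_itM_vec t M v = (\<Sum>k. ((\<i> * of_real t) ^ k / of_nat (fact k)) *s (matpow M k *v v))"

definition basis_vec :: "'n::finite \<Rightarrow> complex^'n" where
  "basis_vec u = (\<chi> w. if w = u then 1 else 0)"

definition perfect_pair_st :: "('n::finite \<Rightarrow> 'n \<Rightarrow> bool) \<Rightarrow> 'n \<Rightarrow> 'n \<Rightarrow> 'n \<Rightarrow> 'n \<Rightarrow> bool" where
  "perfect_pair_st adj a b c d \<longleftrightarrow> (\<exists>t::real. \<exists>\<gamma>::complex. t \<ge> 0 \<and> cmod \<gamma> = 1 \<and>
     exp_itM_vec t (laplacian adj) (basis_vec a - basis_vec b) = \<gamma> *s (basis_vec c - basis_vec d))"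

definition perfect_plus_st :: "('n::finite \<Rightarrow> 'n \<Rightarrow> bool) \<Rightarrow> 'n \<Rightarrow> 'n \<Rightarrow> 'n \<Rightarrow> 'n \<Rightarrow> bool" where
  "perfect_plus_st adj a b c d \<longleftrightarrow> (\<exists>t::real. \<exists>\<gamma>::complex. t \<ge> 0 \<and> cmod \<gamma> = 1 \<and>
     exp_itM_vec t (signless_laplacian adj) (basis_vec a + basis_vec b) = \<gamma> *s (basis_vec c + basis_vec d))"

end

theory Submission
  imports Defs
begin

lemma matpow_Suc: "matpow M (Suc k) = M ** matpow M k"
  by (simp add: matpow_def)

lemma matpow_bound:
  fixes M :: "complex^'n::finite^'n"
  assumes K: "\<forall>x. norm (M *v x) \<le> norm x * K" and K0: "K > 0"
  shows "norm (matpow M k *v v) \<le> K ^ k * norm v"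
proof (induction k)
  case 0
  then show ?case by (simp add: matpow_def)
next
  case (Suc k)
  have "norm (matpow M (Suc k) *v v) = norm (M *v (matpow M k *v v))"
    by (simp add: matpow_Suc matrix_vector_mul_assoc)
  also have "\<dots> \<le> norm (matpow M k *v v) * K" using K by blast
  also have "\<dots> \<le> K ^ k * norm v * K" using Suc K0 by (simp add: mult_right_mono)
  finally show ?case by (simp add: algebra_simps)
qed

lemma norm_smult_c: "norm (c *s (x::complex^'n::finite)) = cmod c * norm x"
  unfolding norm_vec_def
  by (simp add: L2_set_right_distrib norm_mult)

lemma exp_summable:
  fixes M :: "complex^'n::finite^'n"
  shows "summable (\<lambda>k. ((\<i> * of_real t) ^ k / of_nat (fact k)) *s (matpow M k *v v))"
proof -
  obtain K where K: "\<forall>x. norm (M *v x) \<le> norm x * K" and K0: "K > 0"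
    using bounded_linear.pos_bounded[OF matrix_vector_mul_bounded_linear[of M]] by blast
  have s: "summable (\<lambda>k. norm v * (inverse (fact k) * (\<bar>t\<bar> * K) ^ k))"
    by (intro summable_mult summable_exp)
  show ?thesis
  proof (rule summable_comparison_test'[OF s])
    fix k :: nat
    have "norm (((\<i> * of_real t) ^ k / of_nat (fact k)) *s (matpow M k *v v))
        = \<bar>t\<bar> ^ k / fact k * norm (matpow M k *v v)"
      by (simp add: norm_smult_c norm_mult norm_power norm_divide)
    also have "\<dots> \<le> \<bar>t\<bar> ^ k / fact k * (K ^ k * norm v)"
      by (intro mult_left_mono matpow_bound[OF K K0]) auto
    also have "\<dots> = norm v * (inverse (fact k) * (\<bar>t\<bar> * K) ^ k)"
      by (simp add: field_simps power_mult_distrib)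
    finally show "norm (((\<i> * of_real t) ^ k / of_nat (fact k)) *s (matpow M k *v v))
        \<le> norm v * (inverse (fact k) * (\<bar>t\<bar> * K) ^ k)" .
  qed
qed

lemma matpow_conj:
  fixes S M :: "complex^'n::finite^'n"
  assumes SS: "S ** S = mat 1"
  shows "matpow (S ** M ** S) k = S ** matpow M k ** S"
proof (induction k)
  case 0
  then show ?case using SS by (simp add: matpow_def)
next
  case (Suc k)
  have "matpow (S ** M ** S) (Suc k) = S ** M ** (S ** S) ** matpow M k ** S"
    by (simp add: matpow_Suc Suc matrix_mul_assoc)
  also have "\<dots> = S ** matpow M (Suc k) ** S"
    by (simp add: SS matpow_Suc matrix_mul_assoc)
  finally show ?case .
qed

lemma exp_conj:
  fixes S M :: "complex^'n::finite^'n"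
  assumes SS: "S ** S = mat 1"
  shows "exp_itM_vec t (S ** M ** S) v = S *v exp_itM_vec t M (S *v v)"
proof -
  let ?f = "\<lambda>k. ((\<i> * of_real t) ^ k / of_nat (fact k)) *s (matpow M k *v (S *v v))"
  have "exp_itM_vec t (S ** M ** S) v = (\<Sum>k. S *v ?f k)"
    unfolding exp_itM_vec_def
    by (rule suminf_cong)
       (simp add: matpow_conj[OF SS] vector_scalar_commute matrix_vector_mul_assoc matrix_mul_assoc)
  also have "\<dots> = S *v (\<Sum>k. ?f k)"
    by (rule bounded_linear.suminf[OF matrix_vector_mul_bounded_linear exp_summable, symmetric])
  finally show ?thesis unfolding exp_itM_vec_def .
qed

definition diagm :: "('n::finite \<Rightarrow> complex) \<Rightarrow> complex^'n^'n" where
  "diagm s = (\<chi> i j. if i = j then s i else 0)"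

lemma diagm_left: "(diagm s ** M) $ i $ j = s i * M$i$j"
proof -
  have "(diagm s ** M) $ i $ j = (\<Sum>k\<in>UNIV. (if i = k then s i else 0) * M$k$j)"
    by (simp add: diagm_def matrix_matrix_mult_def)
  also have "\<dots> = (\<Sum>k\<in>UNIV. (if i = k then s i * M$k$j else 0))"
    by (rule sum.cong) auto
  also have "\<dots> = s i * M$i$j" by simp
  finally show ?thesis .
qed

lemma diagm_right: "(M ** diagm s) $ i $ j = M$i$j * s j"
proof -
  have "(M ** diagm s) $ i $ j = (\<Sum>k\<in>UNIV. M$i$k * (if k = j then s k else 0))"
    by (simp add: diagm_def matrix_matrix_mult_def)
  also have "\<dots> = (\<Sum>k\<in>UNIV. (if k = j then M$i$k * s k else 0))"
    by (rule sum.cong) auto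
  also have "\<dots> = M$i$j * s j" by simp
  finally show ?thesis .
qed

lemma diagm_vec: "(diagm s *v x) $ i = s i * x$i"
proof -
  have "(diagm s *v x) $ i = (\<Sum>k\<in>UNIV. (if i = k then s i else 0) * x$k)"
    by (simp add: diagm_def matrix_vector_mult_def)
  also have "\<dots> = (\<Sum>k\<in>UNIV. (if i = k then s i * x$k else 0))"
    by (rule sum.cong) auto
  also have "\<dots> = s i * x$i" by simp
  finally show ?thesis .
qed

lemma diagm_conj: "diagm s ** M ** diagm s = (\<chi> i j. s i * M$i$j * s j)"
  by (simp add: vec_eq_iff diagm_left diagm_right)

lemma diagm_mul: "diagm s ** diagm r = diagm (\<lambda>i. s i * r i)"
  by (simp add: vec_eq_iff diagm_left) (simp add: diagm_def)

theorem mainTheorem7: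
  fixes adj :: "'n::finite \<Rightarrow> 'n \<Rightarrow> bool" and B1 B2 :: "'n set" and a b c d :: 'n
  assumes "simple_graph adj"
    and "bipartite_parts adj B1 B2"
    and "a \<in> B1" and "c \<in> B1" and "b \<in> B2" and "d \<in> B2"
  shows "perfect_pair_st adj a b c d \<longleftrightarrow> perfect_plus_st adj a b c d"
proof -
  define s :: "'n \<Rightarrow> complex" where "s i = (if i \<in> B1 then 1 else -1)" for i
  define S where "S = diagm s"
  have sq: "s i * s i = 1" for i by (simp add: s_def)
  have disj: "i \<in> B1 \<Longrightarrow> i \<notin> B2" "i \<notin> B1 \<Longrightarrow> i \<in> B2" for i
    using assms(2) unfolding bipartite_parts_def by auto
  have SS: "S ** S = mat 1"
    unfolding S_def diagm_mul sq by (simp add: diagm_def mat_def)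
  have adjs: "s i * s j = -1" if "adj i j" for i j
  proof -
    have "(i \<in> B1 \<and> j \<in> B2) \<or> (i \<in> B2 \<and> j \<in> B1)"
      using assms(2) that unfolding bipartite_parts_def by blast
    then show ?thesis using disj(1)[of i] disj(1)[of j] by (auto simp: s_def)
  qed
  have irr: "\<not> adj i i" for i using assms(1) unfolding simple_graph_def by auto
  have L1: "S ** laplacian adj ** S = signless_laplacian adj"
    unfolding S_def diagm_conj vec_eq_iff
  proof (intro allI)
    fix i j
    show "(\<chi> i j. s i * laplacian adj $ i $ j * s j) $ i $ j = signless_laplacian adj $ i $ j"
    proof (cases "i = j")
      case True
      then show ?thesis using sq[of i] irr[of i]
        by (simp add: laplacian_def signless_laplacian_def deg_matrix_def adj_matrix_def algebra_simps)
    next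
      case False
      then show ?thesis using adjs[of i j]
        by (auto simp add: laplacian_def signless_laplacian_def deg_matrix_def adj_matrix_def algebra_simps)
    qed
  qed
  have L2: "S ** signless_laplacian adj ** S = laplacian adj"
    unfolding L1[symmetric] by (simp add: matrix_mul_assoc SS) (simp add: matrix_mul_assoc[symmetric] SS)
  have ab: "a \<noteq> b" "c \<noteq> d" using assms disj by auto
  have v1: "S *v (basis_vec a + basis_vec b) = basis_vec a - basis_vec b"
    "S *v (basis_vec a - basis_vec b) = basis_vec a + basis_vec b"
    "S *v (basis_vec c + basis_vec d) = basis_vec c - basis_vec d"
    "S *v (basis_vec c - basis_vec d) = basis_vec c + basis_vec d"
    using assms(3-6) disj ab unfolding S_def vec_eq_iff diagm_vec
    by (auto simp: basis_vec_def s_def)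
  show ?thesis
  proof
    assume "perfect_pair_st adj a b c d"
    then obtain t \<gamma> where h: "t \<ge> 0" "cmod \<gamma> = 1"
      "exp_itM_vec t (laplacian adj) (basis_vec a - basis_vec b) = \<gamma> *s (basis_vec c - basis_vec d)"
      unfolding perfect_pair_st_def by blast
    have "exp_itM_vec t (signless_laplacian adj) (basis_vec a + basis_vec b) = \<gamma> *s (basis_vec c + basis_vec d)"
      unfolding L1[symmetric] exp_conj[OF SS] v1 h(3) vector_scalar_commute by simp
    then show "perfect_plus_st adj a b c d" unfolding perfect_plus_st_def using h by blast
  next
    assume "perfect_plus_st adj a b c d"
    then obtain t \<gamma> where h: "t \<ge> 0" "cmod \<gamma> = 1"
      "exp_itM_vec t (signless_laplacian adj) (basis_vec a + basis_vec b) = \<gamma> *s (basis_vec c + basis_vec d)"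
      unfolding perfect_plus_st_def by blast
    have "exp_itM_vec t (laplacian adj) (basis_vec a - basis_vec b) = \<gamma> *s (basis_vec c - basis_vec d)"
      unfolding L2[symmetric] exp_conj[OF SS] v1 h(3) vector_scalar_commute by simp
    then show "perfect_pair_st adj a b c d" unfolding perfect_pair_st_def using h by blast
  qed
qed

end
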